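(* Let $X$ be a periodic semigroup, $e\in E(X)$, and for $n\in\mathbb N$ let $Z_n=\{z\in Z(X): z^n\in H_e\}$. If for some $\ell\in\mathbb N$ the set $Z_\ell\setminus H_e$ is infinite, then there exist a finite set $F\subseteq Z_\ell$ and an infinite set $A\subseteq Z_\ell\setminus FX^1$ such that $AA\subseteq F\cup H_e\subseteq FX^1$.
   Context: Periodic: every element has an idempotent power. $E(X)$: idempotents; $H_e$: maximal subgroup containing $e$; $Z(X)$: center. $X^1=X\cup\{1\}$ with adjoined identity, $FX^1=\{fx:f\in F,x\in X^1\}$, $AA=\{ab:a,b\in A\}$. *)

theory Defs
  imports Main
begin

text \<open>Semigroups are modelled by the type class semigroup_mult; X is the whole type.\<close>

text \<open>Positive powers in a semigroup: spow x n = x^n for n \<ge> 1 (spow x 0 = x is a dummy value).\<close>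
fun spow :: "'a::semigroup_mult \<Rightarrow> nat \<Rightarrow> 'a" where
  "spow x 0 = x"
| "spow x (Suc 0) = x"
| "spow x (Suc (Suc n)) = spow x (Suc n) * x"

definition idems :: "'a::semigroup_mult set" where
  "idems = {e. e * e = e}"

definition periodic_sg :: "'a::semigroup_mult itself \<Rightarrow> bool" where
  "periodic_sg _ \<longleftrightarrow> (\<forall>x::'a. \<exists>n\<ge>1. spow x n \<in> idems)"

definition center :: "'a::semigroup_mult set" where
  "center = {z. \<forall>x. z * x = x * z}"

text \<open>Maximal subgroup containing the idempotent e (the H-class of e).\<close>
definition maxgrp :: "'a::semigroup_mult \<Rightarrow> 'a set" where
  "maxgrp e = {x. e * x = x \<and> x * e = x \<and>
       (\<exists>y. e * y = y \<and> y * e = y \<and> x * y = e \<and> y * x = e)}"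

text \<open>F X^1 = F \<union> F X.\<close>
definition ideal1 :: "'a::semigroup_mult set \<Rightarrow> 'a set" where
  "ideal1 F = F \<union> {f * x | f x. f \<in> F}"

definition setprod :: "'a::semigroup_mult set \<Rightarrow> 'a set \<Rightarrow> 'a set" where
  "setprod A B = {a * b | a b. a \<in> A \<and> b \<in> B}"

end

theory Submission imports Defs "HOL-Library.Multiset" begin

lemma spow_1: "spow x (Suc 0) = x" by simp

lemma spow_Suc: "n \<ge> 1 \<Longrightarrow> spow x (Suc n) = spow x n * x"
  by (cases n) auto

lemma spow_add: "m \<ge> 1 \<Longrightarrow> n \<ge> 1 \<Longrightarrow> spow x (m+n) = spow x m * spow x n"
proof (induction n)
  case 0 then show ?case by simp
next
  case (Suc n)
  show ?case
  proof (cases "n = 0")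
    case True then show ?thesis using Suc by (simp add: spow_Suc)
  next
    case False
    then have "spow x (m + Suc n) = spow x (m+n) * x" using Suc by (simp add: spow_Suc)
    also have "\<dots> = spow x m * spow x n * x" using Suc False by simp
    also have "\<dots> = spow x m * spow x (Suc n)" using False by (simp add: spow_Suc mult.assoc)
    finally show ?thesis .
  qed
qed

lemma spow_Suc_left: "n \<ge> 1 \<Longrightarrow> spow x (Suc n) = x * spow x n"
  using spow_add[of 1 n x] by simp

lemma center_mult: "x \<in> center \<Longrightarrow> y \<in> center \<Longrightarrow> x * y \<in> center"
proof -
  assume x: "x \<in> center" and y: "y \<in> center"
  have "x * y * z = z * (x * y)" for z
  proof -
    have "x * y * z = x * (z * y)" using y unfolding center_def by (simp add: mult.assoc)
    also have "\<dots> = (x * z) * y" by (simp add: mult.assoc)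
    also have "\<dots> = z * (x * y)" using x unfolding center_def by (simp add: mult.assoc)
    finally show ?thesis .
  qed
  then show ?thesis unfolding center_def by simp
qed

lemma center_comm: "x \<in> center \<Longrightarrow> x * y = y * x"
  unfolding center_def by auto

lemma spow_center: "x \<in> center \<Longrightarrow> spow x n \<in> center"
  by (induction x n rule: spow.induct) (auto simp: center_mult)

lemma spow_mult: "x \<in> center \<Longrightarrow> spow (x*y) n = spow x n * spow y n"
proof (induction n)
  case 0 then show ?case by simp
next
  case (Suc n)
  show ?case
  proof (cases "n = 0")
    case True then show ?thesis by simp
  next
    case False
    have "spow (x*y) (Suc n) = spow x n * spow y n * (x * y)" using Suc False by (simp add: spow_Suc)
    also have "\<dots> = spow x n * (spow y n * x) * y" by (simp add: mult.assoc)
    also have "\<dots> = spow x n * x * (spow y n * y)" using center_comm[OF Suc(2), of "spow y n"] by (metis mult.assoc)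
    also have "\<dots> = spow x (Suc n) * spow y (Suc n)" using False by (simp add: spow_Suc)
    finally show ?thesis .
  qed
qed

lemma ideal1_single: "ideal1 {f} = insert f {f * x | x. True}"
  unfolding ideal1_def by auto

lemma ideal1_trans: "z \<in> ideal1 {f} \<Longrightarrow> f \<in> ideal1 {g} \<Longrightarrow> z \<in> ideal1 {g}"
  unfolding ideal1_single by (auto simp: mult.assoc)

lemma ideal1_mult: "u \<in> ideal1 {f} \<Longrightarrow> v \<in> ideal1 {g} \<Longrightarrow> g \<in> center \<Longrightarrow> u * v \<in> ideal1 {f * g}"
  unfolding ideal1_single
  apply (auto simp: mult.assoc)
  apply (metis center_comm mult.assoc)
  apply (metis center_comm mult.assoc)
  done

lemma ideal1_union: "ideal1 F = (\<Union>f\<in>F. ideal1 {f})"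
  unfolding ideal1_def by auto

lemma ideal1_insert: "ideal1 (insert f F) = ideal1 {f} \<union> ideal1 F"
  unfolding ideal1_def by auto


locale L7 =
  fixes e :: "'a::semigroup_mult" and l :: nat
  assumes eI: "e \<in> idems" and l1: "l \<ge> 1"
begin

abbreviation N where "N \<equiv> {z \<in> center. spow z l \<in> maxgrp e}"
abbreviation H where "H \<equiv> maxgrp e"

lemma ee: "e * e = e" using eI unfolding idems_def by auto

lemma e_H: "e \<in> H"
  unfolding maxgrp_def using ee by auto

lemma H_mult: "x \<in> H \<Longrightarrow> y \<in> H \<Longrightarrow> x * y \<in> H"
proof -
  assume "x \<in> H" "y \<in> H"
  then obtain x' y' where x: "e * x = x" "x * e = x" "e * x' = x'" "x' * e = x'" "x * x' = e" "x' * x = e"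
    and y: "e * y = y" "y * e = y" "e * y' = y'" "y' * e = y'" "y * y' = e" "y' * y = e"
    unfolding maxgrp_def by blast
  have "e * (x*y) = x * y" using x by (metis mult.assoc)
  moreover have "x * y * e = x * y" using y by (metis mult.assoc)
  moreover have "e * (y' * x') = y' * x'" using y by (metis mult.assoc)
  moreover have "(y' * x') * e = y' * x'" using x by (metis mult.assoc)
  moreover have "(x*y) * (y' * x') = e" using x y by (metis mult.assoc)
  moreover have "(y' * x') * (x*y) = e" using x y by (metis mult.assoc)
  ultimately show ?thesis unfolding maxgrp_def by blast
qed

lemma H_spow: "x \<in> H \<Longrightarrow> spow x n \<in> H"
  by (induction x n rule: spow.induct) (auto simp: H_mult)

lemma e_spow: "e * z = z \<Longrightarrow> e * spow z n = spow z n"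
  by (induction z n rule: spow.induct) (auto simp: mult.assoc[symmetric])

lemma K1: assumes "z \<in> N" "e * z = z" shows "z \<in> H"
proof (cases "l = 1")
  case True then show ?thesis using assms by simp
next
  case False
  then obtain m where m: "l = Suc m" "m \<ge> 1" using l1 by (cases l) auto
  have zc: "z \<in> center" using assms by auto
  obtain y where y: "e * y = y" "y * e = y" "spow z l * y = e" "y * spow z l = e"
    using assms unfolding maxgrp_def by blast
  define w where "w = spow z m * y"
  have "e * w = w" unfolding w_def using e_spow[OF assms(2)] by (metis mult.assoc)
  moreover have "w * e = w" unfolding w_def using y by (simp add: mult.assoc)
  moreover have "z * w = e" unfolding w_def using y m spow_Suc_left[of m z] by (simp add: mult.assoc[symmetric])
  moreover have "w * z = e" unfolding w_def using y m spow_Suc[of m z] center_comm[OF zc, of y]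
    by (metis mult.assoc)
  moreover have "z * e = z" using center_comm[OF zc, of e] assms(2) by simp
  ultimately show ?thesis using assms(2) unfolding maxgrp_def by blast
qed

lemma K2: assumes "z \<in> N" "h \<in> H" "z \<in> ideal1 {h}" shows "z \<in> H"
proof -
  have eh: "e * h = h" using assms(2) unfolding maxgrp_def by auto
  have "e * z = z" using assms(3) eh unfolding ideal1_single by (auto simp: mult.assoc[symmetric])
  then show ?thesis using K1 assms(1) by blast
qed

lemma N_mult: "x \<in> N \<Longrightarrow> y \<in> N \<Longrightarrow> x * y \<in> N"
proof -
  assume a: "x \<in> N" "y \<in> N"
  then have "spow (x*y) l = spow x l * spow y l" using spow_mult by blast
  then show ?thesis using a center_mult H_mult by auto
qed

lemma N_spow: "x \<in> N \<Longrightarrow> spow x n \<in> N"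
proof (induction x n rule: spow.induct)
  case (3 x n)
  then have "spow x (Suc n) \<in> N" by simp
  then show ?case using N_mult[of "spow x (Suc n)" x] 3(2) by simp
qed auto

lemma N_H_mult: "x \<in> N \<Longrightarrow> h \<in> N \<Longrightarrow> h \<in> H \<Longrightarrow> x * h \<in> H"
  using K2[of "x*h" h] N_mult center_comm[of x h] unfolding ideal1_single by auto

lemma spow_ge_H: assumes "x \<in> N" "n \<ge> l" shows "spow x n \<in> H"
proof (cases "n = l")
  case True then show ?thesis using assms by simp
next
  case False
  then have "spow x n = spow x l * spow x (n - l)" using spow_add[of l "n-l" x] l1 assms by simp
  then show ?thesis using N_H_mult[of "spow x (n-l)" "spow x l"] assms N_spow
    center_comm[of "spow x l" "spow x (n-l)"] spow_center by auto
qed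


lemma f0: assumes "z0 \<in> N" shows "spow z0 l \<in> N" "spow z0 l \<in> H" "H \<subseteq> ideal1 {spow z0 l}"
proof -
  show "spow z0 l \<in> N" using N_spow assms by blast
  show h: "spow z0 l \<in> H" using assms by simp
  show "H \<subseteq> ideal1 {spow z0 l}"
  proof
    fix h assume hH: "h \<in> H"
    obtain y where "spow z0 l * y = e" using h unfolding maxgrp_def by blast
    moreover have "e * h = h" using hH unfolding maxgrp_def by blast
    ultimately have "h = spow z0 l * (y * h)" by (simp add: mult.assoc[symmetric])
    then show "h \<in> ideal1 {spow z0 l}" unfolding ideal1_single by blast
  qed
qed

lemma setprod_mono: "A \<subseteq> B \<Longrightarrow> setprod A A \<subseteq> setprod B B"
  unfolding setprod_def by blast

lemma finish:
  assumes "z0 \<in> N" "A \<subseteq> N - H" "infinite A" "finite F0" "F0 \<subseteq> N"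
    "setprod A A \<subseteq> F0 \<union> H" "finite (A \<inter> ideal1 F0)"
  shows "\<exists>F A. finite F \<and> F \<subseteq> N \<and> infinite A \<and> A \<subseteq> N - ideal1 F
      \<and> setprod A A \<subseteq> F \<union> H \<and> F \<union> H \<subseteq> ideal1 F"
proof -
  define f where "f = spow z0 l"
  define F where "F = insert f F0"
  define A' where "A' = A - ideal1 F0"
  have fN: "f \<in> N" "f \<in> H" "H \<subseteq> ideal1 {f}" using f0[OF assms(1)] f_def by auto
  have "finite F" using assms(4) F_def by simp
  moreover have "F \<subseteq> N" using fN assms(5) F_def by simp
  moreover have "infinite A'"
  proof
    assume "finite A'"
    then have "finite (A' \<union> (A \<inter> ideal1 F0))" using assms(7) by simp
    moreover have "A' \<union> (A \<inter> ideal1 F0) = A" unfolding A'_def by blast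
    ultimately show False using assms(3) by simp
  qed
  moreover have "A' \<subseteq> N - ideal1 F"
  proof
    fix a assume a: "a \<in> A'"
    then have aN: "a \<in> N" "a \<notin> H" "a \<notin> ideal1 F0" using assms(2) A'_def by auto
    have "a \<notin> ideal1 {f}" using K2[of a f] aN fN by blast
    then show "a \<in> N - ideal1 F" using aN F_def ideal1_insert by auto
  qed
  moreover have "setprod A' A' \<subseteq> F \<union> H"
    using setprod_mono[of A' A] assms(6) F_def A'_def by auto
  moreover have "F \<union> H \<subseteq> ideal1 F"
    using fN F_def ideal1_insert[of f F0] unfolding ideal1_def by auto
  ultimately show ?thesis by blast
qed

definition V where "V b = {z \<in> N. z \<notin> H \<and> z \<in> ideal1 {b}}"

lemma caseI:
  assumes "b \<in> N" "infinite (V b)"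
  shows "\<exists>F A. finite F \<and> F \<subseteq> N \<and> infinite A \<and> A \<subseteq> N - ideal1 F
      \<and> setprod A A \<subseteq> F \<union> H \<and> F \<union> H \<subseteq> ideal1 F"
proof -
  define P where "P = {j. j \<ge> 1 \<and> infinite (V (spow b j))}"
  have Vsub: "\<And>n. n \<ge> l \<Longrightarrow> V (spow b n) = {}"
    unfolding V_def using K2 spow_ge_H[OF assms(1)] by blast
  have "P \<subseteq> {1..<l}"
  proof
    fix j assume "j \<in> P"
    then have "j \<ge> 1" "\<not> (j \<ge> l)" using Vsub P_def by fastforce+
    then show "j \<in> {1..<l}" by simp
  qed
  then have fP: "finite P" using finite_subset by blast
  have "1 \<in> P" using assms P_def by simp
  define j where "j = Max P"
  have jP: "j \<in> P" using fP \<open>1 \<in> P\<close> j_def Max_in by blast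
  then have j1: "j \<ge> 1" using P_def by simp
  have "Suc j \<notin> P" using Max_ge[OF fP, of "Suc j"] j_def by auto
  then have finV: "finite (V (spow b (Suc j)))" using P_def by simp
  define A where "A = V (spow b j) - V (spow b (Suc j))"
  define F0 where "F0 = V (spow b (Suc j))"
  have bj: "spow b j \<in> N" "spow b j \<in> center" using N_spow assms(1) by auto
  have step: "spow b (Suc j) \<in> ideal1 {spow b j}" using spow_Suc[OF j1, of b] unfolding ideal1_single by blast
  have "A \<subseteq> N - H" unfolding A_def V_def by blast
  moreover have "infinite A"
  proof
    assume "finite A"
    then have "finite (A \<union> F0)" using finV F0_def by simp
    moreover have "V (spow b j) \<subseteq> A \<union> F0" unfolding A_def F0_def by blast
    ultimately show False using jP P_def finite_subset by blast
  qed
  moreover have "finite F0" using finV F0_def by simp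
  moreover have "F0 \<subseteq> N" unfolding F0_def V_def by blast
  moreover have "setprod A A \<subseteq> F0 \<union> H"
  proof
    fix z assume "z \<in> setprod A A"
    then obtain u v where uv: "z = u * v" "u \<in> A" "v \<in> A" unfolding setprod_def by blast
    then have "u \<in> ideal1 {spow b j}" "v \<in> ideal1 {spow b j}" "u \<in> N" "v \<in> N"
      unfolding A_def V_def by auto
    then have "z \<in> ideal1 {spow b j * spow b j}" "z \<in> N" using ideal1_mult bj uv N_mult by auto
    moreover have "spow b j * spow b j = spow b (j + j)" using spow_add[OF j1 j1, of b] by simp
    moreover have "spow b (j+j) \<in> ideal1 {spow b (Suc j)}"
    proof (cases "j = 1")
      case True then show ?thesis unfolding ideal1_single by simp
    next
      case False
      then have "spow b (j+j) = spow b (Suc j) * spow b (j - 1)"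
        using spow_add[of "Suc j" "j - 1" b] j1 by simp
      then show ?thesis unfolding ideal1_single by blast
    qed
    ultimately have "z \<in> ideal1 {spow b (Suc j)}" using ideal1_trans by metis
    then show "z \<in> F0 \<union> H" using \<open>z \<in> N\<close> unfolding F0_def V_def by blast
  qed
  moreover have "A \<inter> ideal1 F0 = {}"
  proof (rule ccontr)
    assume "A \<inter> ideal1 F0 \<noteq> {}"
    then obtain a f where "a \<in> A" "f \<in> F0" "a \<in> ideal1 {f}" using ideal1_union[of F0] by blast
    then have "a \<in> ideal1 {spow b (Suc j)}" "a \<in> N" "a \<notin> H"
      using ideal1_trans unfolding F0_def A_def V_def by blast+
    then have "a \<in> F0" unfolding F0_def V_def by blast
    then show False using \<open>a \<in> A\<close> A_def F0_def by blast
  qed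
  ultimately show ?thesis using finish[OF assms(1), of A F0] by simp
qed


definition eqv where "eqv x y \<longleftrightarrow> x = y \<or> (x \<in> H \<and> y \<in> H)"

lemma eqv_refl: "eqv x x" unfolding eqv_def by simp
lemma eqv_sym: "eqv x y \<Longrightarrow> eqv y x" unfolding eqv_def by auto
lemma eqv_trans: "eqv x y \<Longrightarrow> eqv y z \<Longrightarrow> eqv x z" unfolding eqv_def by auto

lemma eqv_mult: "eqv u v \<Longrightarrow> u \<in> N \<Longrightarrow> v \<in> N \<Longrightarrow> w \<in> N \<Longrightarrow> eqv (w*u) (w*v)"
  unfolding eqv_def using N_H_mult by blast

end

locale Seq = L7 +
  fixes c :: "nat \<Rightarrow> 'a"
  assumes cN: "\<And>n. c n \<in> N" and cH: "\<And>n. c n \<notin> H" and cinj: "inj c"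
    and D: "\<And>i x y. i < x \<Longrightarrow> i < y \<Longrightarrow> eqv (c i * c x) (c i * c y)"
begin

lemma cC: "c n \<in> center" using cN by simp

interpretation cf: comp_fun_commute "\<lambda>n acc. c n * acc"
proof
  fix x y
  show "(\<lambda>acc. c y * acc) \<circ> (\<lambda>acc. c x * acc) = (\<lambda>acc. c x * acc) \<circ> (\<lambda>acc. c y * acc)"
    by (rule ext) (metis comp_apply mult.assoc center_comm[OF cC])
qed

definition W where "W b M = fold_mset (\<lambda>n acc. c n * acc) b M"

lemma W_empty[simp]: "W b {#} = b" unfolding W_def by simp
lemma W_add[simp]: "W b (add_mset x M) = c x * W b M" unfolding W_def by simp
lemma W_union: "W b (M + M') = W (W b M) M'" unfolding W_def by simp

lemma W_left: "y \<in> center \<Longrightarrow> y * W b M = W (y * b) M"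
  by (induction M) (auto simp: mult.assoc[symmetric] center_comm[OF cC])

lemma W_N: "b \<in> N \<Longrightarrow> W b M \<in> N"
proof (induction M)
  case (add x M)
  then have "W b M \<in> N" by blast
  then show ?case using N_mult[OF cN[of x] \<open>W b M \<in> N\<close>] by simp
qed simp

lemma W_eqv: "eqv b b' \<Longrightarrow> b \<in> N \<Longrightarrow> b' \<in> N \<Longrightarrow> eqv (W b M) (W b' M)"
proof (induction M)
  case (add x M)
  then have "eqv (W b M) (W b' M)" by blast
  then show ?case using eqv_mult[OF _ W_N W_N cN[of x]] add.prems by simp
qed simp

lemma W_H: "b \<in> N \<Longrightarrow> b \<in> H \<Longrightarrow> W b M \<in> H"
proof (induction M)
  case (add x M)
  then have "W b M \<in> H" by blast
  then show ?case using N_H_mult[OF cN[of x] W_N] add.prems by simp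
qed simp

lemma W_prod: "x \<in> N \<Longrightarrow> y \<in> N \<Longrightarrow> W x M * W y M' = W (x*y) (M + M')"
proof (induction M')
  case empty
  have "W x M * y = y * W x M" using center_comm[of y] empty by simp
  also have "\<dots> = W (y * x) M" using W_left empty by simp
  also have "y * x = x * y" using center_comm[of y] empty by simp
  finally show ?case by (simp add: W_union[symmetric])
next
  case (add z M')
  have "W x M * W y (add_mset z M') = W x M * (c z * W y M')" by simp
  also have "\<dots> = c z * (W x M * W y M')"
    by (metis center_comm[OF cC] mult.assoc)
  also have "\<dots> = c z * W (x*y) (M + M')" using add by simp
  finally show ?case by simp
qed

lemma W_rep: "W b (replicate_mset n x) = (if n = 0 then b else spow (c x) n * b)"
proof (induction n)
  case 0 then show ?case by simp
next
  case (Suc n)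
  then show ?case
    by (cases "n = 0") (auto simp: spow_Suc_left mult.assoc)
qed

lemma swap: "i < x \<Longrightarrow> eqv (W (c i) (add_mset x R)) (W (c i) (add_mset (Suc i) R))"
proof -
  assume ix: "i < x"
  have "W (c i) (add_mset x R) = W (c x * c i) R" using W_left[OF cC] by simp
  moreover have "W (c i) (add_mset (Suc i) R) = W (c (Suc i) * c i) R" using W_left[OF cC] by simp
  moreover have "eqv (c x * c i) (c (Suc i) * c i)"
    using D[OF ix, of "Suc i"] ix center_comm[OF cC, of i] by simp
  moreover have "c x * c i \<in> N" "c (Suc i) * c i \<in> N" using N_mult cN by blast+
  ultimately show ?thesis using W_eqv[of "c x * c i" "c (Suc i) * c i" R] by simp
qed

lemma absorb: "(\<forall>x\<in>#M. i < x) \<Longrightarrow> eqv (W (c i) (R + M)) (W (c i) (R + replicate_mset (size M) (Suc i)))"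
proof (induction M)
  case empty then show ?case by (simp add: eqv_refl)
next
  case (add x M)
  have "W (c i) (R + add_mset x M) = c x * W (c i) (R + M)" by simp
  moreover have "eqv (c x * W (c i) (R + M)) (c x * W (c i) (R + replicate_mset (size M) (Suc i)))"
    using add eqv_mult W_N cN by simp
  moreover have "c x * W (c i) (R + replicate_mset (size M) (Suc i))
      = W (c i) (add_mset x (R + replicate_mset (size M) (Suc i)))" by simp
  moreover have "eqv (W (c i) (add_mset x (R + replicate_mset (size M) (Suc i))))
      (W (c i) (add_mset (Suc i) (R + replicate_mset (size M) (Suc i))))"
    using swap add by simp
  moreover have "add_mset (Suc i) (R + replicate_mset (size M) (Suc i)) = R + replicate_mset (size (add_mset x M)) (Suc i)"
    by simp
  ultimately show ?case using eqv_trans by metis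
qed

definition G where "G i a r = W (c i) (replicate_mset (a - 1) i + replicate_mset r (Suc i))"

lemma G_N: "G i a r \<in> N" unfolding G_def using W_N cN by simp

lemma G_10: "G i 1 0 = c i" unfolding G_def by simp

lemma G_sq: assumes "a \<ge> 1" shows "G i a r * G i a r = G i (2*a) (2*r)"
proof -
  define M where "M = replicate_mset (a - 1) i + replicate_mset r (Suc i)"
  have "G i a r * G i a r = W (c i * c i) (M + M)" unfolding G_def M_def by (rule W_prod[OF cN cN])
  also have "\<dots> = W (c i) (add_mset i (M + M))" using W_left[OF cC] by simp
  also have "add_mset i (M + M) = replicate_mset (2*a - 1) i + replicate_mset (2*r) (Suc i)"
    unfolding M_def using assms by (simp add: multiset_eq_iff)
  finally show ?thesis unfolding G_def by simp
qed

lemma G_prod: assumes "i < k" "a \<ge> 1" "b \<ge> 1"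
  shows "eqv (G i a r * G k b s) (G i a (r + b + s))"
proof -
  define Mi where "Mi = replicate_mset (a - 1) i + replicate_mset r (Suc i)"
  define Mk where "Mk = replicate_mset (b - 1) k + replicate_mset s (Suc k)"
  have "G i a r * G k b s = W (c i * c k) (Mi + Mk)" unfolding G_def Mi_def Mk_def by (rule W_prod[OF cN cN])
  also have "c i * c k = c k * c i" by (rule center_comm[OF cC])
  also have "W (c k * c i) (Mi + Mk) = W (c i) (add_mset k (Mi + Mk))" using W_left[OF cC] by simp
  also have "add_mset k (Mi + Mk) = replicate_mset (a - 1) i + (replicate_mset r (Suc i) + add_mset k Mk)"
    unfolding Mi_def by simp
  finally have 1: "G i a r * G k b s = W (c i) (replicate_mset (a - 1) i + (replicate_mset r (Suc i) + add_mset k Mk))" .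
  have allx: "\<forall>x\<in># replicate_mset r (Suc i) + add_mset k Mk. i < x" unfolding Mk_def using assms by auto
  have sz: "size (replicate_mset r (Suc i) + add_mset k Mk) = r + b + s" unfolding Mk_def using assms by simp
  from absorb[OF allx, of "replicate_mset (a - 1) i"]
  have "eqv (W (c i) (replicate_mset (a - 1) i + (replicate_mset r (Suc i) + add_mset k Mk)))
     (W (c i) (replicate_mset (a - 1) i + replicate_mset (r + b + s) (Suc i)))"
    by (simp only: sz)
  then show ?thesis unfolding 1 by (simp only: G_def)
qed

lemma G_H: assumes "a \<ge> 1" "a \<ge> l \<or> r \<ge> l" shows "G i a r \<in> H"
proof -
  have W1: "W (c i) (replicate_mset (a - 1) i) = spow (c i) a"
    using assms(1) W_rep[of "c i" "a - 1" i] spow_Suc[of "a - 1" "c i"] by (cases "a = 1") auto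
  show ?thesis
  proof (cases "a \<ge> l")
    case True
    have "G i a r = W (spow (c i) a) (replicate_mset r (Suc i))" unfolding G_def W_union W1 by simp
    then show ?thesis using W_H spow_ge_H[OF cN True] N_spow cN by simp
  next
    case False
    then have r: "r \<ge> l" "r \<ge> 1" using assms l1 by auto
    have "G i a r = W (W (c i) (replicate_mset r (Suc i))) (replicate_mset (a - 1) i)"
      unfolding G_def W_union[symmetric] by (simp add: add.commute)
    moreover have "W (c i) (replicate_mset r (Suc i)) = c i * spow (c (Suc i)) r"
      using W_rep[of "c i" r "Suc i"] r center_comm[OF cC, of i "spow (c (Suc i)) r"] by simp
    moreover have "c i * spow (c (Suc i)) r \<in> H"
      using N_H_mult[OF cN] spow_ge_H[OF cN r(1)] N_spow[OF cN] by blast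
    ultimately show ?thesis using W_H N_mult N_spow cN by simp
  qed
qed


definition Fam where "Fam a r = (\<lambda>i. G i a r) ` UNIV - H"

lemma eqv_in: "eqv x y \<Longrightarrow> x \<notin> H \<Longrightarrow> x = y \<and> y \<notin> H" unfolding eqv_def by auto

lemma seq_main: "\<exists>A. A \<subseteq> N - H \<and> infinite A \<and> finite (setprod A A - H)"
proof -
  define MM where "MM = {(a,r). a \<ge> 1 \<and> infinite (Fam a r)}"
  have "MM \<subseteq> {1..<l} \<times> {0..<l}"
  proof
    fix p assume "p \<in> MM"
    then obtain a r where p: "p = (a,r)" "a \<ge> 1" "infinite (Fam a r)" unfolding MM_def by blast
    have "\<not> (a \<ge> l \<or> r \<ge> l)"
    proof
      assume "a \<ge> l \<or> r \<ge> l"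
      then have "Fam a r = {}" unfolding Fam_def using G_H p(2) by auto
      then show False using p(3) by simp
    qed
    then show "p \<in> {1..<l} \<times> {0..<l}" using p by auto
  qed
  then have fMM: "finite MM" using finite_subset by blast
  have "Fam 1 0 = range c" unfolding Fam_def G_10 using cH by auto
  then have "(1,0) \<in> MM" unfolding MM_def using cinj finite_imageD[of c UNIV] by auto
  define f :: "nat \<times> nat \<Rightarrow> nat" where "f = (\<lambda>(a,r). a + r)"
  define m where "m = Max (f ` MM)"
  have "m \<in> f ` MM" unfolding m_def using fMM \<open>(1,0) \<in> MM\<close> by (intro Max_in) auto
  then obtain a r where ar: "(a,r) \<in> MM" "a + r = m" unfolding f_def by auto
  have big: "\<And>a' r'. a' \<ge> 1 \<Longrightarrow> a' + r' > m \<Longrightarrow> finite (Fam a' r')"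
  proof (rule ccontr)
    fix a' r' assume "a' \<ge> 1" "a' + r' > m" "infinite (Fam a' r')"
    then have "(a',r') \<in> MM" unfolding MM_def by simp
    then have "f (a',r') \<le> m" unfolding m_def using fMM by simp
    then show False using \<open>a' + r' > m\<close> unfolding f_def by simp
  qed
  have a1: "a \<ge> 1" using ar MM_def by simp
  define A where "A = Fam a r"
  have "A \<subseteq> N - H" unfolding A_def Fam_def using G_N by auto
  moreover have "infinite A" using ar unfolding A_def MM_def by simp
  moreover have "setprod A A - H \<subseteq> Fam a (r + a + r) \<union> Fam (2*a) (2*r)"
  proof
    fix z assume z: "z \<in> setprod A A - H"
    then obtain i k where zik: "z = G i a r * G k a r" "z \<notin> H"
      unfolding setprod_def A_def Fam_def by blast
    consider "i < k" | "k < i" | "i = k" by arith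
    then show "z \<in> Fam a (r + a + r) \<union> Fam (2*a) (2*r)"
    proof cases
      case 1
      then have "z = G i a (r + a + r)" using eqv_in[OF G_prod[OF 1 a1 a1, of r r]] zik by simp
      then show ?thesis using zik unfolding Fam_def by blast
    next
      case 2
      have "z = G k a r * G i a r" using zik center_comm[of "G i a r" "G k a r"] G_N by simp
      then have "z = G k a (r + a + r)" using eqv_in[OF G_prod[OF 2 a1 a1, of r r]] zik by simp
      then show ?thesis using zik unfolding Fam_def by blast
    next
      case 3
      then have "z = G i (2*a) (2*r)" using G_sq[OF a1] zik by simp
      then show ?thesis using zik unfolding Fam_def by blast
    qed
  qed
  moreover have "finite (Fam a (r + a + r) \<union> Fam (2*a) (2*r))"
    using big a1 ar(2) by simp
  ultimately show ?thesis using finite_subset by blast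
qed

end

context L7 begin

lemma pigeon:
  assumes "b \<in> N" "finite (V b)" "S \<subseteq> N" "infinite S"
  shows "\<exists>S'. S' \<subseteq> S \<and> infinite S' \<and> (\<forall>x\<in>S'. \<forall>y\<in>S'. eqv (b*x) (b*y))"
proof (cases "infinite {x\<in>S. b*x \<in> H}")
  case True
  then show ?thesis unfolding eqv_def by (intro exI[of _ "{x\<in>S. b*x \<in> H}"]) auto
next
  case False
  define S2 where "S2 = {x\<in>S. b*x \<notin> H}"
  have "S = {x\<in>S. b*x \<in> H} \<union> S2" unfolding S2_def by blast
  then have iS2: "infinite S2" using False assms(4) by (metis finite_Un)
  have "(\<lambda>x. b*x) ` S2 \<subseteq> V b" unfolding V_def S2_def ideal1_single using assms N_mult by auto
  then have "finite ((\<lambda>x. b*x) ` S2)" using assms(2) finite_subset by blast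
  from pigeonhole_infinite[OF iS2 this] obtain x0 where x0: "x0 \<in> S2" "infinite {x\<in>S2. b*x = b*x0}" by blast
  have "{x\<in>S2. b*x = b*x0} \<subseteq> S" unfolding S2_def by blast
  moreover have "\<forall>x\<in>{x\<in>S2. b*x = b*x0}. \<forall>y\<in>{x\<in>S2. b*x = b*x0}. eqv (b*x) (b*y)"
    unfolding eqv_def by simp
  ultimately show ?thesis using x0(2) by blast
qed

lemma caseII_seq:
  assumes fin: "\<forall>b\<in>N. finite (V b)" and inf: "infinite (N - H)"
  shows "\<exists>c::nat \<Rightarrow> 'a. (\<forall>n. c n \<in> N) \<and> (\<forall>n. c n \<notin> H) \<and> inj c \<and>
     (\<forall>i x y. i < x \<longrightarrow> i < y \<longrightarrow> eqv (c i * c x) (c i * c y))"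
proof -
  define P where "P S \<longleftrightarrow> S \<subseteq> N - H \<and> infinite S" for S
  define pk where "pk S = (SOME x. x \<in> S \<and> x \<in> N)" for S
  define Q where "Q S S' \<longleftrightarrow> S' \<subseteq> S - {pk S} \<and> infinite S' \<and> (\<forall>x\<in>S'. \<forall>y\<in>S'. eqv (pk S * x) (pk S * y))" for S S'
  define nxt where "nxt S = (SOME S'. Q S S')" for S
  have step: "P S \<Longrightarrow> pk S \<in> S \<and> Q S (nxt S) \<and> P (nxt S)" for S
  proof -
    assume PS: "P S"
    then have "S \<noteq> {}" unfolding P_def by auto
    then have "\<exists>x. x \<in> S \<and> x \<in> N" using PS unfolding P_def by blast
    then have pS: "pk S \<in> S" unfolding pk_def by (rule someI2_ex) blast
    have "\<exists>S'. Q S S'"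
    proof -
      have pN: "pk S \<in> N" using pS PS P_def by auto
      have i1: "infinite (S - {pk S})" using PS P_def by simp
      have s1: "S - {pk S} \<subseteq> N" using PS P_def by auto
      have fV: "finite (V (pk S))" using fin pN by blast
      obtain S' where "S' \<subseteq> S - {pk S}" "infinite S'" "\<forall>x\<in>S'. \<forall>y\<in>S'. eqv (pk S * x) (pk S * y)"
        using pigeon[OF pN fV s1 i1] by blast
      then show ?thesis unfolding Q_def by blast
    qed
    then have "Q S (nxt S)" unfolding nxt_def by (rule someI_ex)
    then show ?thesis using pS PS unfolding Q_def P_def by auto
  qed
  define St where "St n = (nxt ^^ n) (N - H)" for n
  have PSt: "P (St n)" for n
    by (induction n) (auto simp: St_def P_def inf step[unfolded P_def])
  define c where "c n = pk (St n)" for n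
  have StSuc: "St (Suc n) \<subseteq> St n - {c n}" for n
    using step[OF PSt[of n]] unfolding Q_def St_def c_def by simp
  have mono: "St (n + d) \<subseteq> St n" for n d
    by (induction d) (use StSuc in auto)
  have cSt: "c n \<in> St n" for n using step[OF PSt[of n]] c_def by simp
  have later: "i < x \<Longrightarrow> c x \<in> St (Suc i)" for i x
  proof -
    assume "i < x"
    then have "St x \<subseteq> St (Suc i)" using mono[of "Suc i" "x - Suc i"] by simp
    then show ?thesis using cSt[of x] by blast
  qed
  have cNH: "c n \<in> N \<and> c n \<notin> H" for n using cSt[of n] PSt[of n] unfolding P_def by blast
  have ic: "inj c"
  proof (rule injI)
    fix x y assume xy: "c x = c y"
    show "x = y"
    proof (rule ccontr)
      assume "x \<noteq> y"
      then consider "x < y" | "y < x" by arith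
      then show False
      proof cases
        case 1 then show False using later[OF 1] StSuc[of x] xy by auto
      next
        case 2 then show False using later[OF 2] StSuc[of y] xy by auto
      qed
    qed
  qed
  have ceq: "eqv (c i * c x) (c i * c y)" if "i < x" "i < y" for i x y
  proof -
    have "St (Suc i) = nxt (St i)" by (simp add: St_def)
    then have "Q (St i) (St (Suc i))" using step[OF PSt[of i]] by simp
    then have "\<forall>u\<in>St (Suc i). \<forall>v\<in>St (Suc i). eqv (c i * u) (c i * v)" unfolding Q_def c_def by blast
    then show ?thesis using later[OF that(1)] later[OF that(2)] by blast
  qed
  have "(\<forall>n. c n \<in> N) \<and> (\<forall>n. c n \<notin> H) \<and> inj c \<and>
     (\<forall>i x y. i < x \<longrightarrow> i < y \<longrightarrow> eqv (c i * c x) (c i * c y))"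
    using cNH ic ceq by blast
  then show ?thesis by blast
qed

lemma caseII:
  assumes fin: "\<forall>b\<in>N. finite (V b)" and inf: "infinite (N - H)"
  shows "\<exists>F A. finite F \<and> F \<subseteq> N \<and> infinite A \<and> A \<subseteq> N - ideal1 F
      \<and> setprod A A \<subseteq> F \<union> H \<and> F \<union> H \<subseteq> ideal1 F"
proof -
  obtain c :: "nat \<Rightarrow> 'a" where c: "\<forall>n. c n \<in> N" "\<forall>n. c n \<notin> H" "inj c"
     "\<forall>i x y. i < x \<longrightarrow> i < y \<longrightarrow> eqv (c i * c x) (c i * c y)"
    using caseII_seq[OF assms] by blast
  interpret S: Seq e l c
    using c by unfold_locales blast+
  obtain A where A: "A \<subseteq> N - H" "infinite A" "finite (setprod A A - H)" using S.seq_main by blast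
  define F0 where "F0 = setprod A A - H"
  have "F0 \<subseteq> N" unfolding F0_def setprod_def using A(1) N_mult by blast
  have z0: "c 0 \<in> N" using c by simp
  have "A \<inter> ideal1 F0 \<subseteq> (\<Union>f\<in>F0. V f)"
  proof
    fix a assume a: "a \<in> A \<inter> ideal1 F0"
    then obtain f where "f \<in> F0" "a \<in> ideal1 {f}" using ideal1_union[of F0] by blast
    then show "a \<in> (\<Union>f\<in>F0. V f)" using a A(1) unfolding V_def by blast
  qed
  moreover have "finite (\<Union>f\<in>F0. V f)" using fin \<open>F0 \<subseteq> N\<close> A(3) F0_def by auto
  ultimately have "finite (A \<inter> ideal1 F0)" using finite_subset by blast
  then show ?thesis using finish[OF z0 A(1) A(2)] A(3) \<open>F0 \<subseteq> N\<close> unfolding F0_def by blast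
qed

end

theorem lemma7p1:
  fixes e :: "'a::semigroup_mult" and l :: nat
  assumes "periodic_sg TYPE('a)"
    and "e \<in> idems"
    and "l \<ge> 1"
    and "infinite ({z \<in> center. spow z l \<in> maxgrp e} - maxgrp e)"
  shows "\<exists>F A. finite F \<and> F \<subseteq> {z \<in> center. spow z l \<in> maxgrp e}
      \<and> infinite A \<and> A \<subseteq> {z \<in> center. spow z l \<in> maxgrp e} - ideal1 F
      \<and> setprod A A \<subseteq> F \<union> maxgrp e \<and> F \<union> maxgrp e \<subseteq> ideal1 F"
proof -
  interpret L: L7 e l using assms by unfold_locales
  show ?thesis
  proof (cases "\<forall>b\<in>L.N. finite (L.V b)")
    case True then show ?thesis using L.caseII assms(4) by blast
  next
    case False
    then obtain b where "b \<in> L.N" "infinite (L.V b)" by blast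
    then show ?thesis using L.caseI by blast
  qed
qed

end
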